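(* Let $S=\{X_1,\dots,X_n\}$ be a dataset, $H$ a class of binary classifiers, and $W_1,\dots,W_n$ weights with $1\le W_i\le\lambda$ for all $i$. Then for every $h\in H$, the weighted disagreement coefficient satisfies $\theta^W_h\le\lambda^2\theta_h$, where $\theta_h$ is the (unweighted) disagreement coefficient of $h$.
   Context: Unweighted: $D(h_1,h_2)=\frac1n\sum_i\mathbb{I}(h_1(X_i)\ne h_2(X_i))$, $B_H(h,r)=\{h'\in H:D(h,h')\le r\}$, $\mathrm{DIS}(V)=\{X_i:\exists h_1,h_2\in V,h_1(X_i)\ne h_2(X_i)\}$, $\theta_h=\sup_{r>0}\frac{|\mathrm{DIS}(B_H(h,r))|}{rn}$. Weighted: $D^W(h_1,h_2)=\frac{\sum_i W_i\mathbb{I}(h_1(X_i)\ne h_2(X_i))}{\sum_i W_i}$, $B^W_H(h,r)=\{h'\in H:D^W(h,h')\le r\}$, and $\theta^W_h=\sup_{r>0}\frac{\sum_{i: X_i\in\mathrm{DIS}(B^W_H(h,r))}W_i}{r\sum_{i=1}^nW_i}$. *)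

theory Defs
  imports Complex_Main
begin

definition dis_dist :: "nat \<Rightarrow> (nat \<Rightarrow> 'a) \<Rightarrow> ('a \<Rightarrow> bool) \<Rightarrow> ('a \<Rightarrow> bool) \<Rightarrow> real" where
  "dis_dist n X h1 h2 = (\<Sum>i<n. if h1 (X i) \<noteq> h2 (X i) then 1 else 0) / real n"

definition dis_ball :: "('a \<Rightarrow> bool) set \<Rightarrow> nat \<Rightarrow> (nat \<Rightarrow> 'a) \<Rightarrow> ('a \<Rightarrow> bool) \<Rightarrow> real \<Rightarrow> ('a \<Rightarrow> bool) set" where
  "dis_ball H n X h r = {h' \<in> H. dis_dist n X h h' \<le> r}"

definition DIS :: "nat \<Rightarrow> (nat \<Rightarrow> 'a) \<Rightarrow> ('a \<Rightarrow> bool) set \<Rightarrow> nat set" where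
  "DIS n X V = {i. i < n \<and> (\<exists>h1\<in>V. \<exists>h2\<in>V. h1 (X i) \<noteq> h2 (X i))}"

definition dis_coeff :: "('a \<Rightarrow> bool) set \<Rightarrow> nat \<Rightarrow> (nat \<Rightarrow> 'a) \<Rightarrow> ('a \<Rightarrow> bool) \<Rightarrow> real" where
  "dis_coeff H n X h =
     (SUP r\<in>{0<..}. real (card (DIS n X (dis_ball H n X h r))) / (r * real n))"

definition wdis_dist :: "nat \<Rightarrow> (nat \<Rightarrow> 'a) \<Rightarrow> (nat \<Rightarrow> real) \<Rightarrow> ('a \<Rightarrow> bool) \<Rightarrow> ('a \<Rightarrow> bool) \<Rightarrow> real" where
  "wdis_dist n X W h1 h2 =
     (\<Sum>i<n. W i * (if h1 (X i) \<noteq> h2 (X i) then 1 else 0)) / (\<Sum>i<n. W i)"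

definition wdis_ball :: "('a \<Rightarrow> bool) set \<Rightarrow> nat \<Rightarrow> (nat \<Rightarrow> 'a) \<Rightarrow> (nat \<Rightarrow> real) \<Rightarrow> ('a \<Rightarrow> bool) \<Rightarrow> real \<Rightarrow> ('a \<Rightarrow> bool) set" where
  "wdis_ball H n X W h r = {h' \<in> H. wdis_dist n X W h h' \<le> r}"

definition wdis_coeff :: "('a \<Rightarrow> bool) set \<Rightarrow> nat \<Rightarrow> (nat \<Rightarrow> 'a) \<Rightarrow> (nat \<Rightarrow> real) \<Rightarrow> ('a \<Rightarrow> bool) \<Rightarrow> real" where
  "wdis_coeff H n X W h =
     (SUP r\<in>{0<..}. (\<Sum>i\<in>DIS n X (wdis_ball H n X W h r). W i) / (r * (\<Sum>i<n. W i)))"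

end

theory Submission
  imports Defs
begin

lemma DIS_mono: "V \<subseteq> V' \<Longrightarrow> DIS n X V \<subseteq> DIS n X V'"
  unfolding DIS_def by blast

lemma DIS_sub: "DIS n X V \<subseteq> {..<n}"
  unfolding DIS_def by auto

lemma dis_term_bound:
  assumes "n > 0" "r > 0" "h \<in> H"
  shows "real (card (DIS n X (dis_ball H n X h r))) / (r * real n) \<le> real n"
proof (cases "DIS n X (dis_ball H n X h r) = {}")
  case True then show ?thesis by simp
next
  case False
  then obtain i h1 h2 where i: "i < n" "h1 \<in> dis_ball H n X h r" "h2 \<in> dis_ball H n X h r"
    "h1 (X i) \<noteq> h2 (X i)" unfolding DIS_def by blast
  then obtain hj where hj: "hj \<in> dis_ball H n X h r" "h (X i) \<noteq> hj (X i)" by metis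
  have "1 \<le> (\<Sum>k<n. if h (X k) \<noteq> hj (X k) then 1 else (0::real))"
  proof -
    have "(\<Sum>k\<in>{i}. if h (X k) \<noteq> hj (X k) then 1 else (0::real))
        \<le> (\<Sum>k<n. if h (X k) \<noteq> hj (X k) then 1 else (0::real))"
      by (rule sum_mono2) (use i in auto)
    then show ?thesis using hj by simp
  qed
  moreover have "dis_dist n X h hj \<le> r" using hj unfolding dis_ball_def by auto
  ultimately have "1 / real n \<le> r" unfolding dis_dist_def
    by (meson divide_right_mono dual_order.trans of_nat_0_le_iff)
  then have r1: "1 \<le> r * real n" using assms by (simp add: field_simps)
  have c: "card (DIS n X (dis_ball H n X h r)) \<le> n"
    using card_mono[OF _ DIS_sub] by fastforce
  have "real (card (DIS n X (dis_ball H n X h r))) / (r * real n) \<le> real n / (r * real n)"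
    using c r1 by (intro divide_right_mono) auto
  also have "\<dots> \<le> real n" using r1 assms
    by (simp add: divide_le_eq mult.commute)
  finally show ?thesis .
qed

lemma bdd_dis: "n > 0 \<Longrightarrow> h \<in> H \<Longrightarrow>
  bdd_above ((\<lambda>r. real (card (DIS n X (dis_ball H n X h r))) / (r * real n)) ` {0<..})"
  by (rule bdd_aboveI2[where M="real n"]) (auto intro: dis_term_bound)

theorem theorem11:
  fixes H :: "('a \<Rightarrow> bool) set" and n :: nat and X :: "nat \<Rightarrow> 'a"
    and W :: "nat \<Rightarrow> real" and lam :: real and h :: "'a \<Rightarrow> bool"
  assumes "\<And>i. i < n \<Longrightarrow> 1 \<le> W i \<and> W i \<le> lam"
    and "h \<in> H"
  shows "wdis_coeff H n X W h \<le> lam^2 * dis_coeff H n X h"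
proof (cases "n = 0")
  case True
  then show ?thesis unfolding wdis_coeff_def dis_coeff_def by simp
next
  case False
  then have n0: "n > 0" by simp
  have lam1: "1 \<le> lam" using assms(1)[OF n0] by linarith
  have sW1: "real n \<le> (\<Sum>i<n. W i)"
    using sum_mono[of "{..<n}" "\<lambda>_. 1::real" W] assms(1) by simp
  have sW2: "(\<Sum>i<n. W i) \<le> real n * lam"
    using sum_mono[of "{..<n}" W "\<lambda>_. lam"] assms(1) by simp
  show ?thesis unfolding wdis_coeff_def
  proof (rule cSUP_least)
    show "{0<..} \<noteq> ({}::real set)" by auto
  next
    fix r :: real assume "r \<in> {0<..}"
    then have r0: "r > 0" by simp
    define B where "B = dis_ball H n X h (lam * r)"
    have sub: "wdis_ball H n X W h r \<subseteq> B"
    proof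
      fix h' assume h': "h' \<in> wdis_ball H n X W h r"
      define c where "c = (\<lambda>k. if h (X k) \<noteq> h' (X k) then 1 else (0::real))"
      have "(\<Sum>k<n. c k) \<le> (\<Sum>k<n. W k * c k)"
        by (rule sum_mono) (use assms(1) in \<open>auto simp: c_def\<close>)
      also have "\<dots> \<le> r * (\<Sum>i<n. W i)"
      proof -
        have "(\<Sum>k<n. W k * c k) / (\<Sum>i<n. W i) \<le> r"
          using h' unfolding wdis_ball_def wdis_dist_def c_def by simp
        moreover have "0 < (\<Sum>i<n. W i)" using sW1 n0 by linarith
        ultimately show ?thesis by (simp add: pos_divide_le_eq mult.commute)
      qed
      also have "\<dots> \<le> r * (real n * lam)" using sW2 r0 by simp
      finally have "(\<Sum>k<n. c k) / real n \<le> lam * r" using n0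
        by (simp add: divide_le_eq mult_ac)
      then show "h' \<in> B" using h' unfolding B_def dis_ball_def wdis_ball_def dis_dist_def c_def
        by auto
    qed
    define D where "D = DIS n X (wdis_ball H n X W h r)"
    have DB: "D \<subseteq> DIS n X B" unfolding D_def by (rule DIS_mono[OF sub])
    have finB: "finite (DIS n X B)" by (rule finite_subset[OF DIS_sub]) simp
    have Dn: "\<And>i. i \<in> D \<Longrightarrow> i < n" unfolding D_def DIS_def by blast
    have "(\<Sum>i\<in>D. W i) \<le> (\<Sum>i\<in>D. lam)"
      by (rule sum_mono) (use assms(1) Dn in blast)
    also have "\<dots> = lam * real (card D)" by simp
    also have "\<dots> \<le> lam * real (card (DIS n X B))"
      using card_mono[OF finB DB] lam1 by simp
    finally have num: "(\<Sum>i\<in>D. W i) \<le> lam * real (card (DIS n X B))" .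
    have nn: "0 \<le> (\<Sum>i\<in>D. W i)"
      by (rule sum_nonneg) (use assms(1) Dn in force)
    have "(\<Sum>i\<in>D. W i) / (r * (\<Sum>i<n. W i)) \<le> (\<Sum>i\<in>D. W i) / (r * real n)"
      using nn r0 n0 sW1 by (intro divide_left_mono) auto
    also have "\<dots> \<le> lam * real (card (DIS n X B)) / (r * real n)"
      using num r0 n0 by (intro divide_right_mono) auto
    also have "\<dots> = lam^2 * (real (card (DIS n X B)) / ((lam * r) * real n))"
      using lam1 by (simp add: power2_eq_square field_simps)
    also have "\<dots> \<le> lam^2 * dis_coeff H n X h"
    proof (rule mult_left_mono)
      have lr: "lam * r \<in> {0<..}" using lam1 r0 by simp
      show "real (card (DIS n X B)) / (lam * r * real n) \<le> dis_coeff H n X h"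
        unfolding dis_coeff_def B_def
        using cSUP_upper[OF lr bdd_dis[OF n0 assms(2), of X]] by simp
      show "0 \<le> lam^2" by simp
    qed
    finally show "(\<Sum>i\<in>DIS n X (wdis_ball H n X W h r). W i) / (r * (\<Sum>i<n. W i))
        \<le> lam^2 * dis_coeff H n X h" unfolding D_def .
  qed
qed

end
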